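(* Let $\mathcal{C}$ be a Grothendieck site with enough points, let $G$ be a presheaf of groups on $\mathcal{C}$ with an involution $\theta\colon G\to G$, and let $B\subset G$ be a subgroup presheaf with $\theta(B)=B$. Let $B\times B$ act on $G$ by $(b_1,b_2)\cdot g=b_1gb_2^{-1}$, and let $\Gamma=\mathbb{Z}/2\mathbb{Z}$ act on the presheaf of groupoids $E_{B\times B}G$ by $\bar g=\theta(g^{-1})$ on objects and $\overline{(b_1,b_2)}=(\theta(b_2),\theta(b_1))$ on morphisms. Let $Z^1(\theta;G)$ be the presheaf of sets $Z^1(\theta;G)(U)=\{g\in G(U)\mid g\theta(g)=1\}$, with $B$ acting by twisted conjugation $b\cdot g=\theta(b)gb^{-1}$. Then there is a canonical acyclic sectionwise fibration \[(E_{B\times B}G)^{h\Gamma}\xrightarrow{\ \sim\ } E_BZ^1(\theta;G).\]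
   Context: A groupoid is a small category with all morphisms invertible. For a group $H$ acting on a set $S$, $\mathbb{E}_HS$ is the groupoid with object set $S$ and morphism set $H\times S$, where $(h,s)$ is an arrow $s\to h\cdot s$, composition given by multiplication in $H$. For a presheaf of groups $H$ acting on a presheaf of sets $S$, $E_HS$ is the presheaf of groupoids $U\mapsto\mathbb{E}_{H(U)}S(U)$. A map of groupoids is a weak equivalence if it is an equivalence of categories, and a fibration if for every object $x$ and isomorphism $\alpha\colon f(x)\to y$ there is an isomorphism $\beta\colon x\to x_1$ with $f(\beta)=\alpha$. A morphism of presheaves of groupoids is an acyclic sectionwise fibration if on each section $U$ it is both a fibration and a weak equivalence. For a groupoid $X$ with $\Gamma$-action (nontrivial element $x\mapsto\bar x$, acting on objects and morphisms compatibly with structure maps), $X^{h\Gamma}$ has objects $(x,\phi)$ with $\phi\in\mathrm{Hom}(x,\bar x)$, $\bar\phi=\phi^{-1}$, and arrows $(x,\phi)\to(x_1,\phi_1)$ the $\alpha\colon x\to x_1$ with $\phi_1\alpha=\bar\alpha\phi$; for presheaves, $X^{h\Gamma}(U)=X(U)^{h\Gamma}$. *)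

theory Defs
  imports "HOL-Algebra.Group"
begin

record ('o,'m) cat =
  Ob :: "'o set"
  Arr :: "'m set"
  cdom :: "'m \<Rightarrow> 'o"
  ccod :: "'m \<Rightarrow> 'o"
  cid :: "'o \<Rightarrow> 'm"
  ccomp :: "'m \<Rightarrow> 'm \<Rightarrow> 'm"   (* ccomp g f = g o f, f applied first *)

definition category :: "('o,'m) cat \<Rightarrow> bool" where
  "category C \<longleftrightarrow>
     (\<forall>f\<in>Arr C. cdom C f \<in> Ob C \<and> ccod C f \<in> Ob C) \<and>
     (\<forall>x\<in>Ob C. cid C x \<in> Arr C \<and> cdom C (cid C x) = x \<and> ccod C (cid C x) = x) \<and>
     (\<forall>f\<in>Arr C. \<forall>g\<in>Arr C. ccod C f = cdom C g \<longrightarrow>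
        ccomp C g f \<in> Arr C \<and> cdom C (ccomp C g f) = cdom C f \<and> ccod C (ccomp C g f) = ccod C g) \<and>
     (\<forall>f\<in>Arr C. ccomp C f (cid C (cdom C f)) = f \<and> ccomp C (cid C (ccod C f)) f = f) \<and>
     (\<forall>f\<in>Arr C. \<forall>g\<in>Arr C. \<forall>h\<in>Arr C. ccod C f = cdom C g \<longrightarrow> ccod C g = cdom C h \<longrightarrow>
        ccomp C h (ccomp C g f) = ccomp C (ccomp C h g) f)"

definition presheaf_of_groups ::
  "('o,'m) cat \<Rightarrow> ('o \<Rightarrow> 'a monoid) \<Rightarrow> ('m \<Rightarrow> 'a \<Rightarrow> 'a) \<Rightarrow> bool" where
  "presheaf_of_groups C G res \<longleftrightarrow>
     (\<forall>U\<in>Ob C. group (G U)) \<and>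
     (\<forall>f\<in>Arr C. res f \<in> hom (G (ccod C f)) (G (cdom C f))) \<and>
     (\<forall>U\<in>Ob C. \<forall>x\<in>carrier (G U). res (cid C U) x = x) \<and>
     (\<forall>f\<in>Arr C. \<forall>g\<in>Arr C. ccod C f = cdom C g \<longrightarrow>
        (\<forall>x\<in>carrier (G (ccod C g)). res (ccomp C g f) x = res f (res g x)))"

definition presheaf_involution ::
  "('o,'m) cat \<Rightarrow> ('o \<Rightarrow> 'a monoid) \<Rightarrow> ('m \<Rightarrow> 'a \<Rightarrow> 'a) \<Rightarrow> ('o \<Rightarrow> 'a \<Rightarrow> 'a) \<Rightarrow> bool" where
  "presheaf_involution C G res \<theta> \<longleftrightarrow>
     (\<forall>U\<in>Ob C. \<theta> U \<in> hom (G U) (G U) \<and> (\<forall>x\<in>carrier (G U). \<theta> U (\<theta> U x) = x)) \<and>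
     (\<forall>f\<in>Arr C. \<forall>x\<in>carrier (G (ccod C f)). res f (\<theta> (ccod C f) x) = \<theta> (cdom C f) (res f x))"

definition subgroup_presheaf ::
  "('o,'m) cat \<Rightarrow> ('o \<Rightarrow> 'a monoid) \<Rightarrow> ('m \<Rightarrow> 'a \<Rightarrow> 'a) \<Rightarrow> ('o \<Rightarrow> 'a set) \<Rightarrow> bool" where
  "subgroup_presheaf C G res B \<longleftrightarrow>
     (\<forall>U\<in>Ob C. subgroup (B U) (G U)) \<and>
     (\<forall>f\<in>Arr C. res f ` B (ccod C f) \<subseteq> B (cdom C f))"

record ('x,'y) grpd =
  gObj :: "'x set"
  gHom :: "'x \<Rightarrow> 'x \<Rightarrow> 'y set"
  gcomp :: "'y \<Rightarrow> 'y \<Rightarrow> 'y"   (* gcomp b a = b o a, a applied first *)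
  gid :: "'x \<Rightarrow> 'y"

definition is_functor ::
  "('x,'y) grpd \<Rightarrow> ('x2,'y2) grpd \<Rightarrow> ('x \<Rightarrow> 'x2) \<Rightarrow> ('x \<Rightarrow> 'x \<Rightarrow> 'y \<Rightarrow> 'y2) \<Rightarrow> bool" where
  "is_functor X Y Fo Fm \<longleftrightarrow>
     (\<forall>x\<in>gObj X. Fo x \<in> gObj Y) \<and>
     (\<forall>x\<in>gObj X. \<forall>y\<in>gObj X. \<forall>a\<in>gHom X x y. Fm x y a \<in> gHom Y (Fo x) (Fo y)) \<and>
     (\<forall>x\<in>gObj X. \<forall>y\<in>gObj X. \<forall>z\<in>gObj X. \<forall>a\<in>gHom X x y. \<forall>b\<in>gHom X y z.
        Fm x z (gcomp X b a) = gcomp Y (Fm y z b) (Fm x y a)) \<and>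
     (\<forall>x\<in>gObj X. Fm x x (gid X x) = gid Y (Fo x))"

definition iso_arr :: "('x,'y) grpd \<Rightarrow> 'x \<Rightarrow> 'x \<Rightarrow> 'y \<Rightarrow> bool" where
  "iso_arr X x y a \<longleftrightarrow> a \<in> gHom X x y \<and>
     (\<exists>b\<in>gHom X y x. gcomp X b a = gid X x \<and> gcomp X a b = gid X y)"

definition nat_iso ::
  "('x,'y) grpd \<Rightarrow> ('x2,'y2) grpd \<Rightarrow> ('x \<Rightarrow> 'x2) \<Rightarrow> ('x \<Rightarrow> 'x \<Rightarrow> 'y \<Rightarrow> 'y2)
     \<Rightarrow> ('x \<Rightarrow> 'x2) \<Rightarrow> ('x \<Rightarrow> 'x \<Rightarrow> 'y \<Rightarrow> 'y2) \<Rightarrow> ('x \<Rightarrow> 'y2) \<Rightarrow> bool" where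
  "nat_iso X Y Fo Fm Go Gm \<eta> \<longleftrightarrow>
     (\<forall>x\<in>gObj X. iso_arr Y (Fo x) (Go x) (\<eta> x)) \<and>
     (\<forall>x\<in>gObj X. \<forall>y\<in>gObj X. \<forall>a\<in>gHom X x y.
        gcomp Y (\<eta> y) (Fm x y a) = gcomp Y (Gm x y a) (\<eta> x))"

text \<open>Weak equivalence = equivalence of categories: a functor with a quasi-inverse.\<close>

definition weak_equivalence ::
  "('x,'y) grpd \<Rightarrow> ('x2,'y2) grpd \<Rightarrow> ('x \<Rightarrow> 'x2) \<Rightarrow> ('x \<Rightarrow> 'x \<Rightarrow> 'y \<Rightarrow> 'y2) \<Rightarrow> bool" where
  "weak_equivalence X Y Fo Fm \<longleftrightarrow> is_functor X Y Fo Fm \<and>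
     (\<exists>Go Gm \<eta> \<epsilon>. is_functor Y X Go Gm \<and>
        nat_iso X X (\<lambda>x. x) (\<lambda>x y a. a) (\<lambda>x. Go (Fo x)) (\<lambda>x y a. Gm (Fo x) (Fo y) (Fm x y a)) \<eta> \<and>
        nat_iso Y Y (\<lambda>y. Fo (Go y)) (\<lambda>x y a. Fm (Go x) (Go y) (Gm x y a)) (\<lambda>y. y) (\<lambda>x y a. a) \<epsilon>)"

definition gpd_fibration ::
  "('x,'y) grpd \<Rightarrow> ('x2,'y2) grpd \<Rightarrow> ('x \<Rightarrow> 'x2) \<Rightarrow> ('x \<Rightarrow> 'x \<Rightarrow> 'y \<Rightarrow> 'y2) \<Rightarrow> bool" where
  "gpd_fibration X Y Fo Fm \<longleftrightarrow> is_functor X Y Fo Fm \<and>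
     (\<forall>x\<in>gObj X. \<forall>y\<in>gObj Y. \<forall>a. iso_arr Y (Fo x) y a \<longrightarrow>
        (\<exists>x1\<in>gObj X. \<exists>b. iso_arr X x x1 b \<and> Fm x x1 b = a))"

text \<open>E_H S : objects S, morphisms (h,s) : s \<rightarrow> h.s, composition via multiplication in H.\<close>

definition act_grpd ::
  "('h,'c) monoid_scheme \<Rightarrow> ('h \<Rightarrow> 's \<Rightarrow> 's) \<Rightarrow> 's set \<Rightarrow> ('s, 'h \<times> 's) grpd" where
  "act_grpd H act S =
     \<lparr> gObj = S,
       gHom = (\<lambda>s t. {(h, s) |h. h \<in> carrier H \<and> s \<in> S \<and> act h s = t}),
       gcomp = (\<lambda>(h', s') (h, s). (h' \<otimes>\<^bsub>H\<^esub> h, s)),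
       gid = (\<lambda>s. (\<one>\<^bsub>H\<^esub>, s)) \<rparr>"

definition hfix ::
  "('x,'y) grpd \<Rightarrow> ('x \<Rightarrow> 'x) \<Rightarrow> ('y \<Rightarrow> 'y) \<Rightarrow> ('x \<times> 'y, 'y) grpd" where
  "hfix X bo bm =
     \<lparr> gObj = {(x, \<phi>). x \<in> gObj X \<and> \<phi> \<in> gHom X x (bo x) \<and>
                 gcomp X (bm \<phi>) \<phi> = gid X x \<and> gcomp X \<phi> (bm \<phi>) = gid X (bo x)},
       gHom = (\<lambda>(x, \<phi>) (x1, \<phi>1). {a \<in> gHom X x x1. gcomp X \<phi>1 a = gcomp X (bm a) \<phi>}),
       gcomp = gcomp X,
       gid = (\<lambda>(x, \<phi>). gid X x) \<rparr>"

definition EBBG :: "('o \<Rightarrow> 'a monoid) \<Rightarrow> ('o \<Rightarrow> 'a set) \<Rightarrow> 'o \<Rightarrow> ('a, ('a \<times> 'a) \<times> 'a) grpd" where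
  "EBBG G B U = act_grpd ((G U)\<lparr>carrier := B U\<rparr> \<times>\<times> (G U)\<lparr>carrier := B U\<rparr>)
     (\<lambda>(b1, b2) g. b1 \<otimes>\<^bsub>G U\<^esub> g \<otimes>\<^bsub>G U\<^esub> inv\<^bsub>G U\<^esub> b2) (carrier (G U))"

definition bar_obj :: "('o \<Rightarrow> 'a monoid) \<Rightarrow> ('o \<Rightarrow> 'a \<Rightarrow> 'a) \<Rightarrow> 'o \<Rightarrow> 'a \<Rightarrow> 'a" where
  "bar_obj G \<theta> U g = \<theta> U (inv\<^bsub>G U\<^esub> g)"

definition bar_mor :: "('o \<Rightarrow> 'a monoid) \<Rightarrow> ('o \<Rightarrow> 'a \<Rightarrow> 'a) \<Rightarrow> 'o \<Rightarrow> ('a \<times> 'a) \<times> 'a \<Rightarrow> ('a \<times> 'a) \<times> 'a" where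
  "bar_mor G \<theta> U = (\<lambda>((b1, b2), g). ((\<theta> U b2, \<theta> U b1), bar_obj G \<theta> U g))"

definition hEBBG :: "('o \<Rightarrow> 'a monoid) \<Rightarrow> ('o \<Rightarrow> 'a \<Rightarrow> 'a) \<Rightarrow> ('o \<Rightarrow> 'a set) \<Rightarrow> 'o
    \<Rightarrow> ('a \<times> (('a \<times> 'a) \<times> 'a), ('a \<times> 'a) \<times> 'a) grpd" where
  "hEBBG G \<theta> B U = hfix (EBBG G B U) (bar_obj G \<theta> U) (bar_mor G \<theta> U)"

definition Z1 :: "'a monoid \<Rightarrow> ('a \<Rightarrow> 'a) \<Rightarrow> 'a set" where
  "Z1 H t = {g \<in> carrier H. g \<otimes>\<^bsub>H\<^esub> t g = \<one>\<^bsub>H\<^esub>}"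

definition EBZ :: "('o \<Rightarrow> 'a monoid) \<Rightarrow> ('o \<Rightarrow> 'a \<Rightarrow> 'a) \<Rightarrow> ('o \<Rightarrow> 'a set) \<Rightarrow> 'o \<Rightarrow> ('a, 'a \<times> 'a) grpd" where
  "EBZ G \<theta> B U = act_grpd ((G U)\<lparr>carrier := B U\<rparr>)
     (\<lambda>b g. \<theta> U b \<otimes>\<^bsub>G U\<^esub> g \<otimes>\<^bsub>G U\<^esub> inv\<^bsub>G U\<^esub> b) (Z1 (G U) (\<theta> U))"

definition can_obj :: "('o \<Rightarrow> 'a monoid) \<Rightarrow> 'o \<Rightarrow> 'a \<times> (('a \<times> 'a) \<times> 'a) \<Rightarrow> 'a" where
  "can_obj G U = (\<lambda>(g, ((b1, b2), g')). b1 \<otimes>\<^bsub>G U\<^esub> g)"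

definition can_mor :: "('o \<Rightarrow> 'a monoid) \<Rightarrow> 'o \<Rightarrow> 'a \<times> (('a \<times> 'a) \<times> 'a) \<Rightarrow> 'a \<times> (('a \<times> 'a) \<times> 'a)
    \<Rightarrow> ('a \<times> 'a) \<times> 'a \<Rightarrow> 'a \<times> 'a" where
  "can_mor G U x y = (\<lambda>((c1, c2), g). (c2, can_obj G U x))"

definition res_mEBB :: "('a \<Rightarrow> 'a) \<Rightarrow> ('a \<times> 'a) \<times> 'a \<Rightarrow> ('a \<times> 'a) \<times> 'a" where
  "res_mEBB r = (\<lambda>((b1, b2), g). ((r b1, r b2), r g))"

definition res_ohEBB :: "('a \<Rightarrow> 'a) \<Rightarrow> 'a \<times> (('a \<times> 'a) \<times> 'a) \<Rightarrow> 'a \<times> (('a \<times> 'a) \<times> 'a)" where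
  "res_ohEBB r = (\<lambda>(g, \<phi>). (r g, res_mEBB r \<phi>))"

definition res_mEBZ :: "('a \<Rightarrow> 'a) \<Rightarrow> 'a \<times> 'a \<Rightarrow> 'a \<times> 'a" where
  "res_mEBZ r = (\<lambda>(b, g). (r b, r g))"

end

theory Submission
  imports Defs
begin

locale L = group M for M :: "'a monoid" (structure) +
  fixes t :: "'a \<Rightarrow> 'a" and Bs :: "'a set"
  assumes sub: "subgroup Bs M" and th: "t \<in> hom M M"
    and tt: "\<And>x. x \<in> carrier M \<Longrightarrow> t (t x) = x" and tB: "t ` Bs = Bs"
begin

lemma Bc: "b \<in> Bs \<Longrightarrow> b \<in> carrier M" by (rule subgroup.mem_carrier[OF sub])
lemma Bm: "b \<in> Bs \<Longrightarrow> c \<in> Bs \<Longrightarrow> b \<otimes> c \<in> Bs" by (rule subgroup.m_closed[OF sub])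
lemma Bi: "b \<in> Bs \<Longrightarrow> inv b \<in> Bs" by (rule subgroup.m_inv_closed[OF sub])
lemma B1: "\<one> \<in> Bs" by (rule subgroup.one_closed[OF sub])
lemma tB': "b \<in> Bs \<Longrightarrow> t b \<in> Bs" by (metis imageI tB)
lemma tc: "x \<in> carrier M \<Longrightarrow> t x \<in> carrier M" using th by (simp add: hom_def Pi_def)
lemma tm: "x \<in> carrier M \<Longrightarrow> y \<in> carrier M \<Longrightarrow> t (x \<otimes> y) = t x \<otimes> t y" using th by (simp add: hom_def)
lemma t1: "t \<one> = \<one>" using hom_one[OF th] by (simp add: is_group)
lemma ti: "x \<in> carrier M \<Longrightarrow> t (inv x) = inv (t x)"
  by (metis inv_equality inv_closed l_inv tc tm t1)

definition "X = act_grpd (M\<lparr>carrier:=Bs\<rparr> \<times>\<times> M\<lparr>carrier:=Bs\<rparr>) (\<lambda>(b1,b2) g. b1 \<otimes> g \<otimes> inv b2) (carrier M)"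
definition "HX = hfix X (\<lambda>g. t (inv g)) (\<lambda>((b1,b2),g). ((t b2, t b1), t (inv g)))"
definition "Y = act_grpd (M\<lparr>carrier:=Bs\<rparr>) (\<lambda>b g. t b \<otimes> g \<otimes> inv b) (Z1 M t)"
definition "Fo = (\<lambda>(g, ((b1::'a,b2::'a),g'::'a)). b1 \<otimes> g)"
definition "Fm = (\<lambda>x (y::'a \<times> ('a\<times>'a)\<times>'a) ((c1::'a,c2::'a),g::'a). (c2, Fo x))"

lemma objHX: "p \<in> gObj HX \<longleftrightarrow> (\<exists>x b1. p = (x, ((b1, inv (t b1)), x)) \<and> x \<in> carrier M \<and> b1 \<in> Bs \<and> b1 \<otimes> x \<otimes> t b1 = t (inv x))"
proof
  assume "p \<in> gObj HX"
  then obtain x b1 b2 where p: "p = (x, ((b1, b2), x))" and x: "x \<in> carrier M" and b: "b1 \<in> Bs" "b2 \<in> Bs"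
    and e1: "b1 \<otimes> x \<otimes> inv b2 = t (inv x)" and e2: "t b2 \<otimes> b1 = \<one>"
    by (auto simp: HX_def X_def hfix_def act_grpd_def)
  have "t b2 = inv b1" using e2 b by (metis inv_equality Bc tc)
  then have "b2 = inv (t b1)" using b by (metis Bc tt ti)
  then show "\<exists>x b1. p = (x, ((b1, inv (t b1)), x)) \<and> x \<in> carrier M \<and> b1 \<in> Bs \<and> b1 \<otimes> x \<otimes> t b1 = t (inv x)"
    using p x b e1 by (auto simp: Bc tc)
next
  assume "\<exists>x b1. p = (x, ((b1, inv (t b1)), x)) \<and> x \<in> carrier M \<and> b1 \<in> Bs \<and> b1 \<otimes> x \<otimes> t b1 = t (inv x)"
  then obtain x b1 where p: "p = (x, ((b1, inv (t b1)), x))" and x: "x \<in> carrier M" and b: "b1 \<in> Bs"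
    and e: "b1 \<otimes> x \<otimes> t b1 = t (inv x)" by blast
  have c: "b1 \<in> carrier M" "t b1 \<in> carrier M" using b Bc tc by auto
  have "t (inv (t b1)) = inv b1" using c by (simp add: ti tt)
  then show "p \<in> gObj HX" using p x b e c
    by (auto simp: HX_def X_def hfix_def act_grpd_def Bi tB')
qed


lemma tZ: "y \<in> Z1 M t \<Longrightarrow> t y = inv y"
proof -
  assume "y \<in> Z1 M t"
  then have y: "y \<in> carrier M" "y \<otimes> t y = \<one>" unfolding Z1_def by auto
  then have "inv (t y) = y" by (simp add: inv_equality tc)
  then show ?thesis using y by (metis inv_inv tc)
qed
lemma Z1c: "y \<in> Z1 M t \<Longrightarrow> y \<in> carrier M" unfolding Z1_def by auto

lemma objY[simp]: "gObj Y = Z1 M t" by (simp add: Y_def act_grpd_def)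
lemma homY: "gHom Y s u = {(h, s) |h. h \<in> Bs \<and> s \<in> Z1 M t \<and> t h \<otimes> s \<otimes> inv h = u}"
  by (simp add: Y_def act_grpd_def)
lemma compY[simp]: "gcomp Y (h', s') (h, s) = (h' \<otimes> h, s)" by (simp add: Y_def act_grpd_def)
lemma idY[simp]: "gid Y s = (\<one>, s)" by (simp add: Y_def act_grpd_def)
lemma compHX[simp]: "gcomp HX ((c1', c2'), y) ((c1, c2), x) = ((c1' \<otimes> c1, c2' \<otimes> c2), x)"
  by (simp add: HX_def X_def hfix_def act_grpd_def)
lemma idHX[simp]: "gid HX (x, \<phi>) = ((\<one>, \<one>), x)"
  by (simp add: HX_def X_def hfix_def act_grpd_def)

lemma homHX:
  assumes x: "x \<in> carrier M" and b1: "b1 \<in> Bs" and y: "y \<in> carrier M" and d1: "d1 \<in> Bs"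
  shows "a \<in> gHom HX (x, ((b1, inv (t b1)), x)) (y, ((d1, inv (t d1)), y)) \<longleftrightarrow>
    (\<exists>c1 c2. a = ((c1, c2), x) \<and> c1 \<in> Bs \<and> c2 \<in> Bs \<and> c1 \<otimes> x \<otimes> inv c2 = y \<and> d1 \<otimes> c1 = t c2 \<otimes> b1)"
proof -
  have key: "inv (t d1) \<otimes> c2 = t c1 \<otimes> inv (t b1)" if "c1 \<in> Bs" "c2 \<in> Bs" "d1 \<otimes> c1 = t c2 \<otimes> b1" for c1 c2
  proof -
    have c: "c1 \<in> carrier M" "c2 \<in> carrier M" "t c1 \<in> carrier M" "t c2 \<in> carrier M" "b1 \<in> carrier M" "d1 \<in> carrier M"
      "t b1 \<in> carrier M" "t d1 \<in> carrier M" using that b1 d1 by (auto simp: Bc tc)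
    have "t (d1 \<otimes> c1) = t (t c2 \<otimes> b1)" using that by simp
    then have e: "t d1 \<otimes> t c1 = c2 \<otimes> t b1" using c by (simp add: tm tt)
    have "inv (t d1) \<otimes> c2 = inv (t d1) \<otimes> (c2 \<otimes> t b1) \<otimes> inv (t b1)" using c by (simp add: m_assoc)
    also have "\<dots> = inv (t d1) \<otimes> (t d1 \<otimes> t c1) \<otimes> inv (t b1)" using e by simp
    also have "\<dots> = t c1 \<otimes> inv (t b1)" using c by (simp add: m_assoc[symmetric])
    finally show ?thesis .
  qed
  show ?thesis
    using x y b1 d1 key by (auto simp: HX_def X_def hfix_def act_grpd_def)
qed


lemma lcan[simp]: "x \<in> carrier M \<Longrightarrow> y \<in> carrier M \<Longrightarrow> inv x \<otimes> (x \<otimes> y) = y"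
  by (simp add: m_assoc[symmetric])
lemma rcan[simp]: "x \<in> carrier M \<Longrightarrow> y \<in> carrier M \<Longrightarrow> x \<otimes> (inv x \<otimes> y) = y"
  by (simp add: m_assoc[symmetric])

lemma objE:
  assumes "p \<in> gObj HX"
  obtains x b1 where "p = (x, ((b1, inv (t b1)), x))" "x \<in> carrier M" "b1 \<in> Bs" "b1 \<otimes> x \<otimes> t b1 = t (inv x)"
  using assms objHX by blast

lemma objI: "x \<in> carrier M \<Longrightarrow> b1 \<in> Bs \<Longrightarrow> b1 \<otimes> x \<otimes> t b1 = t (inv x) \<Longrightarrow> (x, ((b1, inv (t b1)), x)) \<in> gObj HX"
  using objHX by blast

lemma Fo_simp[simp]: "Fo (x, ((b1, b2), x')) = b1 \<otimes> x" by (simp add: Fo_def)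
lemma Fm_simp[simp]: "Fm px py ((c1, c2), g) = (c2, Fo px)" by (simp add: Fm_def)

lemma FoZ: assumes "p \<in> gObj HX" shows "Fo p \<in> Z1 M t"
proof -
  obtain x b1 where p: "p = (x, ((b1, inv (t b1)), x))" "x \<in> carrier M" "b1 \<in> Bs" "b1 \<otimes> x \<otimes> t b1 = t (inv x)"
    using assms objE by blast
  have c: "b1 \<in> carrier M" "t b1 \<in> carrier M" "t x \<in> carrier M" using p Bc tc by auto
  have "b1 \<otimes> x \<otimes> t (b1 \<otimes> x) = (b1 \<otimes> x \<otimes> t b1) \<otimes> t x" using c p(2) by (simp add: tm m_assoc)
  also have "\<dots> = t (inv x) \<otimes> t x" using p(4) by simp
  also have "\<dots> = \<one>" using p c by (simp add: ti)
  finally show ?thesis using p c unfolding Z1_def by simp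
qed

lemma homE:
  assumes "px \<in> gObj HX" "py \<in> gObj HX" "a \<in> gHom HX px py"
  obtains x b1 y d1 c1 c2 where "px = (x, ((b1, inv (t b1)), x))" "x \<in> carrier M" "b1 \<in> Bs" "b1 \<otimes> x \<otimes> t b1 = t (inv x)"
    "py = (y, ((d1, inv (t d1)), y))" "y \<in> carrier M" "d1 \<in> Bs" "d1 \<otimes> y \<otimes> t d1 = t (inv y)"
    "a = ((c1, c2), x)" "c1 \<in> Bs" "c2 \<in> Bs" "c1 \<otimes> x \<otimes> inv c2 = y" "d1 \<otimes> c1 = t c2 \<otimes> b1"
proof -
  obtain x b1 where p: "px = (x, ((b1, inv (t b1)), x))" "x \<in> carrier M" "b1 \<in> Bs" "b1 \<otimes> x \<otimes> t b1 = t (inv x)"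
    using assms objE by blast
  obtain y d1 where q: "py = (y, ((d1, inv (t d1)), y))" "y \<in> carrier M" "d1 \<in> Bs" "d1 \<otimes> y \<otimes> t d1 = t (inv y)"
    using assms objE by blast
  show ?thesis using assms(3) p q homHX[of x b1 y d1 a] that by auto
qed

lemma Ffun: "is_functor HX Y Fo Fm"
  unfolding is_functor_def
proof (intro conjI ballI)
  fix p assume "p \<in> gObj HX" then show "Fo p \<in> gObj Y" using FoZ by simp
next
  fix px py a assume A: "px \<in> gObj HX" "py \<in> gObj HX" "a \<in> gHom HX px py"
  then obtain x b1 y d1 c1 c2 where h: "px = (x, ((b1, inv (t b1)), x))" "x \<in> carrier M" "b1 \<in> Bs"
    "py = (y, ((d1, inv (t d1)), y))" "y \<in> carrier M" "d1 \<in> Bs"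
    "a = ((c1, c2), x)" "c1 \<in> Bs" "c2 \<in> Bs" "c1 \<otimes> x \<otimes> inv c2 = y" "d1 \<otimes> c1 = t c2 \<otimes> b1"
    by (rule homE) 
  have c: "b1 \<in> carrier M" "d1 \<in> carrier M" "c1 \<in> carrier M" "c2 \<in> carrier M" "t c2 \<in> carrier M" using h Bc tc by auto
  have "t c2 \<otimes> (b1 \<otimes> x) \<otimes> inv c2 = (t c2 \<otimes> b1) \<otimes> x \<otimes> inv c2" using c h by (simp add: m_assoc)
  also have "\<dots> = (d1 \<otimes> c1) \<otimes> x \<otimes> inv c2" using h(11) by simp
  also have "\<dots> = d1 \<otimes> (c1 \<otimes> x \<otimes> inv c2)" using c h(2) by (simp add: m_assoc)
  also have "\<dots> = d1 \<otimes> y" using h by simp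
  finally have e: "t c2 \<otimes> (b1 \<otimes> x) \<otimes> inv c2 = d1 \<otimes> y" .
  show "Fm px py a \<in> gHom Y (Fo px) (Fo py)"
    using h e FoZ[OF A(1)] by (simp add: homY)
next
  fix px py pz a b assume A: "px \<in> gObj HX" "py \<in> gObj HX" "pz \<in> gObj HX" "a \<in> gHom HX px py" "b \<in> gHom HX py pz"
  obtain c1 c2 x where a: "a = ((c1, c2), x)" using A(1,2,4) homE by metis
  obtain e1 e2 y where b: "b = ((e1, e2), y)" using A(2,3,5) homE by metis
  show "Fm px pz (gcomp HX b a) = gcomp Y (Fm py pz b) (Fm px py a)" using a b by simp
next
  fix px assume "px \<in> gObj HX"
  then obtain x b1 where "px = (x, ((b1, inv (t b1)), x))" using objE by metis
  then show "Fm px px (gid HX px) = gid Y (Fo px)" by simp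
qed


lemma fib: "gpd_fibration HX Y Fo Fm"
  unfolding gpd_fibration_def
proof (intro conjI Ffun ballI allI impI)
  fix px y a assume A: "px \<in> gObj HX" "y \<in> gObj Y" "iso_arr Y (Fo px) y a"
  obtain x b1 where p: "px = (x, ((b1, inv (t b1)), x))" "x \<in> carrier M" "b1 \<in> Bs" "b1 \<otimes> x \<otimes> t b1 = t (inv x)"
    using A(1) objE by blast
  obtain h where a: "a = (h, b1 \<otimes> x)" "h \<in> Bs" "t h \<otimes> (b1 \<otimes> x) \<otimes> inv h = y"
    using A(3) p(1) unfolding iso_arr_def homY by auto
  have c: "b1 \<in> carrier M" "t b1 \<in> carrier M" "h \<in> carrier M" "t h \<in> carrier M" "inv h \<in> carrier M"
    using p a Bc tc by auto
  define x1 where "x1 = x \<otimes> inv h"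
  define d1 where "d1 = t h \<otimes> b1"
  have x1c: "x1 \<in> carrier M" using c p unfolding x1_def by simp
  have d1B: "d1 \<in> Bs" using a p unfolding d1_def by (simp add: Bm tB')
  have "d1 \<otimes> x1 \<otimes> t d1 = t h \<otimes> b1 \<otimes> (x \<otimes> inv h) \<otimes> (h \<otimes> t b1)"
    using c unfolding d1_def x1_def by (simp add: tm tt)
  also have "\<dots> = t h \<otimes> (b1 \<otimes> x \<otimes> t b1)" using c p(2) by (simp add: m_assoc)
  also have "\<dots> = t h \<otimes> t (inv x)" using p(4) by simp
  also have "\<dots> = t (inv x1)" using c p(2) unfolding x1_def by (simp add: inv_mult_group tm)
  finally have o1: "(x1, ((d1, inv (t d1)), x1)) \<in> gObj HX" using objI x1c d1B by blast
  define b where "b = ((\<one>, h), x)"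
  define b' where "b' = ((\<one>, inv h), x1)"
  have hb: "b \<in> gHom HX px (x1, ((d1, inv (t d1)), x1))"
    unfolding p(1) homHX[OF p(2) p(3) x1c d1B] b_def using c p a B1 unfolding x1_def d1_def by simp
  have hb': "b' \<in> gHom HX (x1, ((d1, inv (t d1)), x1)) px"
    unfolding p(1) homHX[OF x1c d1B p(2) p(3)] b'_def using c p a B1 Bi unfolding x1_def d1_def
    by (simp add: m_assoc ti)
  have "iso_arr HX px (x1, ((d1, inv (t d1)), x1)) b"
    unfolding iso_arr_def using hb hb' c unfolding p(1) b_def b'_def
    by (intro conjI bexI[of _ "((\<one>, inv h), x1)"]) auto
  moreover have "Fm px (x1, ((d1, inv (t d1)), x1)) b = a" using a p unfolding b_def by simp
  ultimately show "\<exists>x1\<in>gObj HX. \<exists>b. iso_arr HX px x1 b \<and> Fm px x1 b = a" using o1 by blast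
qed

definition "Go = (\<lambda>y. (y, ((\<one>, \<one>), y)))"
definition "Gm = (\<lambda>(y::'a) (y'::'a) (h::'a, s::'a). ((t h, h), y))"
definition "eta = (\<lambda>(x::'a, ((b1::'a, b2::'a), x'::'a)). ((b1, \<one>), x))"
definition "eps = (\<lambda>y::'a. (\<one>, y))"

lemma Go_alt: "Go y = (y, ((\<one>, inv (t \<one>)), y))" by (simp add: Go_def t1)

lemma GoObj: "y \<in> Z1 M t \<Longrightarrow> Go y \<in> gObj HX"
  unfolding Go_alt using Z1c tZ B1 by (intro objI) (auto simp: ti t1)

lemma Gfun: "is_functor Y HX Go Gm"
  unfolding is_functor_def
proof (intro conjI ballI)
  fix y assume "y \<in> gObj Y" then show "Go y \<in> gObj HX" using GoObj by simp
next
  fix y y' a assume A: "y \<in> gObj Y" "y' \<in> gObj Y" "a \<in> gHom Y y y'"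
  then obtain h where a: "a = (h, y)" "h \<in> Bs" "t h \<otimes> y \<otimes> inv h = y'" by (auto simp: homY)
  show "Gm y y' a \<in> gHom HX (Go y) (Go y')"
    unfolding Go_alt using A a Z1c B1 tB' Bc tc
    by (subst homHX) (auto simp: Gm_def t1)
next
  fix y y' z a b assume A: "y \<in> gObj Y" "y' \<in> gObj Y" "z \<in> gObj Y" "a \<in> gHom Y y y'" "b \<in> gHom Y y' z"
  then obtain h where a: "a = (h, y)" "h \<in> Bs" by (auto simp: homY)
  obtain h' where b: "b = (h', y')" "h' \<in> Bs" using A by (auto simp: homY)
  show "Gm y z (gcomp Y b a) = gcomp HX (Gm y' z b) (Gm y y' a)"
    using a b by (simp add: Gm_def tm Bc)
next
  fix y assume "y \<in> gObj Y"
  then show "Gm y y (gid Y y) = gid HX (Go y)" by (simp add: Gm_def Go_def t1)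
qed

lemma weq: "weak_equivalence HX Y Fo Fm"
  unfolding weak_equivalence_def
proof (intro conjI Ffun exI[of _ Go] exI[of _ Gm] exI[of _ eta] exI[of _ eps] Gfun)
  show "nat_iso HX HX (\<lambda>x. x) (\<lambda>x y a. a) (\<lambda>x. Go (Fo x)) (\<lambda>x y a. Gm (Fo x) (Fo y) (Fm x y a)) eta"
    unfolding nat_iso_def
  proof (intro conjI ballI)
    fix px assume A: "px \<in> gObj HX"
    then obtain x b1 where p: "px = (x, ((b1, inv (t b1)), x))" "x \<in> carrier M" "b1 \<in> Bs" "b1 \<otimes> x \<otimes> t b1 = t (inv x)"
      using objE by blast
    have c: "b1 \<in> carrier M" "inv b1 \<in> Bs" using p Bc Bi by auto
    have z: "b1 \<otimes> x \<in> carrier M" using c p by simp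
    have h1: "eta px \<in> gHom HX px (Go (Fo px))"
      unfolding p(1) Go_alt Fo_simp eta_def using p c B1 z by (subst homHX) (auto simp: t1)
    have h2: "((inv b1, \<one>), b1 \<otimes> x) \<in> gHom HX (Go (Fo px)) px"
      unfolding p(1) Go_alt Fo_simp using p c B1 z by (subst homHX) (auto simp: t1 m_assoc[symmetric])
    show "iso_arr HX px (Go (Fo px)) (eta px)"
      unfolding iso_arr_def using h1 h2 c p unfolding eta_def Go_def
      by (intro conjI bexI[of _ "((inv b1, \<one>), b1 \<otimes> x)"]) auto
  next
    fix px py a assume A: "px \<in> gObj HX" "py \<in> gObj HX" "a \<in> gHom HX px py"
    then obtain x b1 y d1 c1 c2 where h: "px = (x, ((b1, inv (t b1)), x))" "x \<in> carrier M" "b1 \<in> Bs"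
      "py = (y, ((d1, inv (t d1)), y))" "y \<in> carrier M" "d1 \<in> Bs"
      "a = ((c1, c2), x)" "c1 \<in> Bs" "c2 \<in> Bs" "c1 \<otimes> x \<otimes> inv c2 = y" "d1 \<otimes> c1 = t c2 \<otimes> b1"
      by (rule homE)
    show "gcomp HX (eta py) a = gcomp HX (Gm (Fo px) (Fo py) (Fm px py a)) (eta px)"
      using h Bc by (simp add: eta_def Gm_def)
  qed
next
  show "nat_iso Y Y (\<lambda>y. Fo (Go y)) (\<lambda>x y a. Fm (Go x) (Go y) (Gm x y a)) (\<lambda>y. y) (\<lambda>x y a. a) eps"
    unfolding nat_iso_def
  proof (intro conjI ballI)
    fix y assume A: "y \<in> gObj Y"
    then have y: "y \<in> carrier M" "y \<in> Z1 M t" using Z1c by auto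
    have "eps y \<in> gHom Y (Fo (Go y)) y" "(\<one>, y) \<in> gHom Y y (Fo (Go y))"
      using y B1 t1 by (auto simp: homY eps_def Go_def)
    then show "iso_arr Y (Fo (Go y)) y (eps y)"
      unfolding iso_arr_def using y B1 Bc by (intro conjI bexI[of _ "(\<one>, y)"]) (auto simp: eps_def Go_def)
  next
    fix y y' a assume A: "y \<in> gObj Y" "y' \<in> gObj Y" "a \<in> gHom Y y y'"
    then obtain h where a: "a = (h, y)" "h \<in> Bs" "y \<in> carrier M" by (auto simp: homY Z1_def)
    show "gcomp Y (eps y') (Fm (Go y) (Go y') (Gm y y' a)) = gcomp Y a (eps y)"
      using a Bc by (simp add: eps_def Go_def Gm_def)
  qed
qed

end

theorem mainTheorem10:
  fixes C :: "('o, 'm) cat"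
    and G :: "'o \<Rightarrow> 'a monoid"
    and res :: "'m \<Rightarrow> 'a \<Rightarrow> 'a"
    and \<theta> :: "'o \<Rightarrow> 'a \<Rightarrow> 'a"
    and B :: "'o \<Rightarrow> 'a set"
  assumes "category C"
    and "presheaf_of_groups C G res"
    and "presheaf_involution C G res \<theta>"
    and "subgroup_presheaf C G res B"
    and "\<forall>U\<in>Ob C. \<theta> U ` B U = B U"
  shows "(\<forall>U\<in>Ob C.
            gpd_fibration (hEBBG G \<theta> B U) (EBZ G \<theta> B U) (can_obj G U) (can_mor G U) \<and>
            weak_equivalence (hEBBG G \<theta> B U) (EBZ G \<theta> B U) (can_obj G U) (can_mor G U)) \<and>
         (\<forall>f\<in>Arr C.
            (\<forall>x\<in>gObj (hEBBG G \<theta> B (ccod C f)).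
               can_obj G (cdom C f) (res_ohEBB (res f) x) = res f (can_obj G (ccod C f) x)) \<and>
            (\<forall>x\<in>gObj (hEBBG G \<theta> B (ccod C f)). \<forall>y\<in>gObj (hEBBG G \<theta> B (ccod C f)).
             \<forall>a\<in>gHom (hEBBG G \<theta> B (ccod C f)) x y.
               can_mor G (cdom C f) (res_ohEBB (res f) x) (res_ohEBB (res f) y) (res_mEBB (res f) a)
                 = res_mEBZ (res f) (can_mor G (ccod C f) x y a)))"
  proof -
  note A = assms
  have loc: "L (G U) (\<theta> U) (B U)" if U: "U \<in> Ob C" for U
  proof -
    have g: "group (G U)" using A(2) U unfolding presheaf_of_groups_def by blast
    have s: "subgroup (B U) (G U)" using A(4) U unfolding subgroup_presheaf_def by blast
    have h: "\<theta> U \<in> hom (G U) (G U)" "\<forall>x\<in>carrier (G U). \<theta> U (\<theta> U x) = x"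
      using A(3) U unfolding presheaf_involution_def by blast+
    show ?thesis unfolding L_def L_axioms_def using g s h A(5) U by blast
  qed
  have eqs: "hEBBG G \<theta> B U = L.HX (G U) (\<theta> U) (B U)" "EBZ G \<theta> B U = L.Y (G U) (\<theta> U) (B U)"
    "can_obj G U = L.Fo (G U)" "can_mor G U = L.Fm (G U)" if U: "U \<in> Ob C" for U
    using loc[OF U]
    by (simp_all add: hEBBG_def EBBG_def L.HX_def L.X_def bar_obj_def[abs_def] bar_mor_def EBZ_def L.Y_def
        can_obj_def L.Fo_def can_mor_def[abs_def] L.Fm_def)
  have part1: "gpd_fibration (hEBBG G \<theta> B U) (EBZ G \<theta> B U) (can_obj G U) (can_mor G U) \<and>
            weak_equivalence (hEBBG G \<theta> B U) (EBZ G \<theta> B U) (can_obj G U) (can_mor G U)"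
    if U: "U \<in> Ob C" for U
    unfolding eqs[OF U] using L.fib[OF loc[OF U]] L.weq[OF loc[OF U]] by blast
  have part2: "(\<forall>x\<in>gObj (hEBBG G \<theta> B (ccod C f)).
               can_obj G (cdom C f) (res_ohEBB (res f) x) = res f (can_obj G (ccod C f) x)) \<and>
            (\<forall>x\<in>gObj (hEBBG G \<theta> B (ccod C f)). \<forall>y\<in>gObj (hEBBG G \<theta> B (ccod C f)).
             \<forall>a\<in>gHom (hEBBG G \<theta> B (ccod C f)) x y.
               can_mor G (cdom C f) (res_ohEBB (res f) x) (res_ohEBB (res f) y) (res_mEBB (res f) a)
                 = res_mEBZ (res f) (can_mor G (ccod C f) x y a))"
    if f: "f \<in> Arr C" for f
  proof -
    let ?W = "ccod C f" and ?V = "cdom C f"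
    have W: "?W \<in> Ob C" using A(1) f unfolding category_def by blast
    have rh: "res f \<in> hom (G ?W) (G ?V)" using A(2) f unfolding presheaf_of_groups_def by blast
    have co: "can_obj G ?V (res_ohEBB (res f) x) = res f (can_obj G ?W x)"
      if x: "x \<in> gObj (hEBBG G \<theta> B ?W)" for x
    proof -
      obtain g b1 where xx: "x = (g, ((b1, inv\<^bsub>G ?W\<^esub> (\<theta> ?W b1)), g))" "g \<in> carrier (G ?W)" "b1 \<in> B ?W"
        using L.objE[OF loc[OF W]] x unfolding eqs[OF W] by metis
      have "b1 \<in> carrier (G ?W)" using L.Bc[OF loc[OF W]] xx by blast
      then show ?thesis using xx rh by (simp add: can_obj_def res_ohEBB_def res_mEBB_def hom_mult)
    qed
    show ?thesis
    proof (intro conjI ballI)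
      fix x assume "x \<in> gObj (hEBBG G \<theta> B ?W)" then show "can_obj G ?V (res_ohEBB (res f) x) = res f (can_obj G ?W x)"
        by (rule co)
    next
      fix x y and a :: "('a \<times> 'a) \<times> 'a" assume x: "x \<in> gObj (hEBBG G \<theta> B ?W)"
      obtain c1 c2 g where a: "a = ((c1, c2), g)" by (metis prod.exhaust)
      show "can_mor G ?V (res_ohEBB (res f) x) (res_ohEBB (res f) y) (res_mEBB (res f) a)
                 = res_mEBZ (res f) (can_mor G ?W x y a)"
        using co[OF x] a by (simp add: can_mor_def res_mEBB_def res_mEBZ_def)
    qed
  qed
  show ?thesis using part1 part2 by blast
qed

end
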